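(* Let $k$ be a positive integer and $n_0,\ldots,n_{k-1}$ positive integers, with indices read modulo $k$. For each $j\in\{0,\ldots,k-1\}$ let $A^{(j)}$ be a real $n_j\times n_{j+1}$ matrix. Suppose the signed digraph $G_{A^{(0)}A^{(1)}\cdots A^{(k-1)}}$ contains an e-cycle. Then there exist matrices in $\mathcal{Q}(A^{(0)})\mathcal{Q}(A^{(1)})\cdots\mathcal{Q}(A^{(k-1)})$ which are not $P_0$-matrices.
   Context: Indices $j$ are taken modulo $k$. For a real matrix $M$, $\mathcal{Q}(M)$ is the set of real matrices $X$ of the same dimensions with $M_{ij}>0\Rightarrow X_{ij}>0$, $M_{ij}<0\Rightarrow X_{ij}<0$, $M_{ij}=0\Rightarrow X_{ij}=0$, and $\mathcal{Q}(A^{(0)})\cdots\mathcal{Q}(A^{(k-1)})=\{B^{(0)}\cdots B^{(k-1)} : B^{(j)}\in\mathcal{Q}(A^{(j)})\}$. The signed digraph $G=G_{A^{(0)}\cdots A^{(k-1)}}$ has vertex set the disjoint union of $V_0,\ldots,V_{k-1}$ with $V_j=\{V_j^1,\ldots,V_j^{n_j}\}$; there is a directed edge from $V_j^r$ to $V_{j+1}^s$ iff $(A^{(j)})_{rs}\neq 0$, with the sign of $(A^{(j)})_{rs}$; no other edges (loops allowed when $k=1$). A cycle means a directed cycle; every cycle has length a multiple of $k$. A cycle with $kr_1$ edges, $r_2$ of them negative, is an e-cycle if $(-1)^{r_1+r_2}=1$ and an o-cycle otherwise. A $P_0$-matrix is a real square matrix all of whose principal minors are nonnegative. *)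

theory Defs
  imports "Jordan_Normal_Form.Determinant" "Jordan_Normal_Form.DL_Submatrix"
begin

definition qual_class :: "real mat \<Rightarrow> real mat set" where
  "qual_class M = {X. dim_row X = dim_row M \<and> dim_col X = dim_col M \<and>
     (\<forall>i j. i < dim_row M \<longrightarrow> j < dim_col M \<longrightarrow> sgn (X $$ (i,j)) = sgn (M $$ (i,j)))}"

definition P0_matrix :: "real mat \<Rightarrow> bool" where
  "P0_matrix M \<longleftrightarrow> dim_row M = dim_col M \<and>
     (\<forall>I. I \<subseteq> {0..<dim_row M} \<longrightarrow> det (submatrix M I I) \<ge> 0)"

definition cyc_prod :: "nat \<Rightarrow> nat \<Rightarrow> (nat \<Rightarrow> real mat) \<Rightarrow> real mat" where
  "cyc_prod n0 k B = foldl (\<lambda>P j. P * B j) (1\<^sub>m n0) [0..<k]"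

text \<open>Signed digraph G_{A(0)...A(k-1)}: vertices (j,r) with j<k, r<n j;
  edge (j,r) -> (j',s) iff j' = (j+1) mod k and A j (r,s) is nonzero.\<close>
definition vert :: "nat \<Rightarrow> (nat \<Rightarrow> nat) \<Rightarrow> nat \<times> nat \<Rightarrow> bool" where
  "vert k n v \<longleftrightarrow> fst v < k \<and> snd v < n (fst v)"

definition edge :: "nat \<Rightarrow> (nat \<Rightarrow> nat) \<Rightarrow> (nat \<Rightarrow> real mat) \<Rightarrow> nat \<times> nat \<Rightarrow> nat \<times> nat \<Rightarrow> bool" where
  "edge k n A v w \<longleftrightarrow> vert k n v \<and> vert k n w \<and> fst w = (fst v + 1) mod k \<and>
     A (fst v) $$ (snd v, snd w) \<noteq> 0"

definition is_cycle :: "nat \<Rightarrow> (nat \<Rightarrow> nat) \<Rightarrow> (nat \<Rightarrow> real mat) \<Rightarrow> (nat \<times> nat) list \<Rightarrow> bool" where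
  "is_cycle k n A c \<longleftrightarrow> c \<noteq> [] \<and> distinct c \<and>
     (\<forall>i < length c. edge k n A (c ! i) (c ! ((i + 1) mod length c)))"

definition neg_edges :: "(nat \<Rightarrow> real mat) \<Rightarrow> (nat \<times> nat) list \<Rightarrow> nat" where
  "neg_edges A c = card {i. i < length c \<and>
     A (fst (c ! i)) $$ (snd (c ! i), snd (c ! ((i + 1) mod length c))) < 0}"

text \<open>e-cycle: kr1 edges (r1 = length/k), r2 negative edges, (-1)^(r1+r2) = 1.\<close>
definition is_e_cycle :: "nat \<Rightarrow> (nat \<Rightarrow> nat) \<Rightarrow> (nat \<Rightarrow> real mat) \<Rightarrow> (nat \<times> nat) list \<Rightarrow> bool" where
  "is_e_cycle k n A c \<longleftrightarrow> is_cycle k n A c \<and>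
     (-1::int) ^ (length c div k + neg_edges A c) = 1"

end

theory Submission imports Defs begin

definition sh :: "nat \<Rightarrow> nat \<Rightarrow> nat" where
  "sh r a = (if a < r then (if Suc a = r then 0 else Suc a) else a)"

lemma sh_Suc: "sh (Suc r) = Transposition.transpose 0 r \<circ> sh r"
  by (auto simp: fun_eq_iff sh_def Transposition.transpose_def)

lemma sh_permutes: "sh r permutes {..<r}"
proof (induction r)
  case 0
  have "sh 0 = id" by (auto simp: fun_eq_iff sh_def)
  then show ?case by (metis permutes_id)
next
  case (Suc r)
  have "sh r permutes {..<Suc r}" using Suc permutes_subset by fastforce
  moreover have "Transposition.transpose 0 r permutes {..<Suc r}"
    by (rule permutes_swap_id) auto
  ultimately show ?case unfolding sh_Suc by (rule permutes_compose)
qed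

lemma sign_sh: "sign (sh (Suc r)) = (-1::int) ^ r"
proof (induction r)
  case 0
  have "sh 1 = id" by (auto simp: fun_eq_iff sh_def)
  then show ?case by simp
next
  case (Suc r)
  have p: "permutation (sh (Suc r))"
    using sh_permutes permutation_permutes by blast
  show ?case unfolding sh_Suc[of "Suc r"]
    by (subst sign_compose[OF permutation_swap_id p]) (simp add: sign_swap_id Suc)
qed

lemma sh_lt: "a < r \<Longrightarrow> sh r a = (a + 1) mod r"
  by (auto simp: sh_def)

lemma mod_inj_add:
  fixes t x y m :: nat
  assumes "x < m" "y < m" "(t + x) mod m = (t + y) mod m"
  shows "x = y"
proof -
  have "\<And>x y. x < m \<Longrightarrow> y < m \<Longrightarrow> x \<le> y \<Longrightarrow> (t + x) mod m = (t + y) mod m \<Longrightarrow> x = y"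
  proof -
    fix x y assume h: "x < m" "y < m" "x \<le> y" "(t + x) mod m = (t + y) mod m"
    then have "m dvd (t + y) - (t + x)" using mod_eq_dvd_iff_nat[of "t+x" "t+y" m] by simp
    then have "m dvd y - x" by simp
    then show "x = y" using h by (metis diff_is_0_eq dvd_imp_le le_antisym less_imp_diff_less not_le zero_less_diff)
  qed
  then show ?thesis using assms by (metis nat_le_linear)
qed

lemma mod_add_self_zero: fixes f q k :: nat assumes "f < k" "(f + q) mod k = f" shows "q mod k = 0"
proof -
  have h: "(f + q mod k) mod k = f" using assms(2) by (simp add: mod_add_right_eq)
  have ql: "q mod k < k" using assms(1) by simp
  show ?thesis
  proof (cases "f + q mod k < k")
    case True
    then show ?thesis using h by simp
  next
    case False
    then have "(f + q mod k) mod k = (f + q mod k - k) mod k" by (simp add: le_mod_geq)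
    also have "\<dots> = f + q mod k - k" using ql assms(1) by (intro mod_less) linarith
    finally show ?thesis using h ql by simp
  qed
qed

locale ecyc =
  fixes k :: nat and n :: "nat \<Rightarrow> nat" and A :: "nat \<Rightarrow> real mat" and c :: "(nat \<times> nat) list"
  assumes k1: "k \<ge> 1"
    and dimA: "\<forall>j<k. A j \<in> carrier_mat (n j) (n ((j + 1) mod k))"
    and cyc: "is_cycle k n A c"
    and par: "(-1::int) ^ (length c div k + neg_edges A c) = 1"
begin

abbreviation m where "m \<equiv> length c"

lemma m_pos: "m > 0" using cyc unfolding is_cycle_def by auto

lemma dist: "distinct c" using cyc unfolding is_cycle_def by auto

lemma edge_c: "i < m \<Longrightarrow> edge k n A (c!i) (c!((i+1) mod m))"
  using cyc unfolding is_cycle_def by auto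

lemma fst_lt: "i < m \<Longrightarrow> fst (c!i) < k"
  using edge_c unfolding edge_def vert_def by blast

lemma snd_lt: "i < m \<Longrightarrow> snd (c!i) < n (fst (c!i))"
  using edge_c unfolding edge_def vert_def by blast

lemma fst_step: "i < m \<Longrightarrow> fst (c!((i+1) mod m)) = (fst (c!i) + 1) mod k"
  using edge_c unfolding edge_def by blast

lemma fst_shift: "i < m \<Longrightarrow> fst (c!((i+l) mod m)) = (fst (c!i) + l) mod k"
proof (induction l)
  case 0
  then show ?case using fst_lt by simp
next
  case (Suc l)
  have "(i + Suc l) mod m = ((i+l) mod m + 1) mod m" by (simp add: mod_Suc_eq)
  then have "fst (c!((i + Suc l) mod m)) = (fst (c!((i+l) mod m)) + 1) mod k"
    using fst_step m_pos by simp
  also have "\<dots> = (fst (c!i) + Suc l) mod k" using Suc by (simp add: mod_Suc_eq)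
  finally show ?case .
qed

lemma k_dvd_m: "m mod k = 0"
proof -
  have "fst (c!0) = (fst (c!0) + m) mod k" using fst_shift[of 0 m] m_pos by simp
  moreover have "fst (c!0) < k" using fst_lt m_pos by blast
  ultimately show ?thesis using mod_add_self_zero by metis
qed

definition r where "r = m div k"

lemma m_eq: "m = r * k" using k_dvd_m unfolding r_def by (metis div_mult_mod_eq add_0_right)

lemma r_pos: "r > 0" using m_eq m_pos by (metis gr0I mult_is_0)

definition t0 where "t0 = (k - fst (c!0)) mod m"

lemma t0_lt: "t0 < m" unfolding t0_def using m_pos by simp

lemma fst_t0: "fst (c!t0) = 0"
proof -
  have "fst (c!((0 + (k - fst (c!0))) mod m)) = (fst (c!0) + (k - fst (c!0))) mod k"
    using fst_shift m_pos by blast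
  moreover have "fst (c!0) < k" using fst_lt m_pos by blast
  ultimately show ?thesis unfolding t0_def by simp
qed

definition pos where "pos a = (t0 + a*k) mod m"

lemma pos_lt: "pos a < m" unfolding pos_def using m_pos by simp

lemma pos_add: "(pos a + d) mod m = (t0 + (a*k + d)) mod m" unfolding pos_def
  by (simp add: mod_add_left_eq add.assoc)

lemma fst_pos_shift: "fst (c!((pos a + d) mod m)) = d mod k"
proof -
  have "(pos a + d) mod m = (t0 + (a*k + d)) mod m" unfolding pos_def
    by (simp add: mod_add_left_eq add.assoc)
  then show ?thesis using fst_shift[OF t0_lt, of "a*k+d"] fst_t0 by simp
qed

definition u where "u a = snd (c!(pos a))"

lemma c_pos: "c!(pos a) = (0, u a)"
  using fst_pos_shift[of a 0] pos_lt unfolding u_def by (metis add_0_right mod_0 mod_less prod.collapse)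

lemma u_lt: "u a < n 0"
  using snd_lt[OF pos_lt[of a]] c_pos[of a] by simp

lemma pos_inj: "a < r \<Longrightarrow> b < r \<Longrightarrow> pos a = pos b \<Longrightarrow> a = b"
proof -
  assume ab: "a < r" "b < r" "pos a = pos b"
  have "a * k < m" "b * k < m" using ab k1 m_eq by auto
  then have "a * k = b * k" using mod_inj_add ab(3) unfolding pos_def by blast
  then show "a = b" using k1 by simp
qed

lemma u_inj: "inj_on u {..<r}"
proof (rule inj_onI)
  fix a b assume ab: "a \<in> {..<r}" "b \<in> {..<r}" "u a = u b"
  then have "c!(pos a) = c!(pos b)" using c_pos by simp
  then have "pos a = pos b" using dist pos_lt nth_eq_iff_index_eq by blast
  then show "a = b" using pos_inj ab by auto
qed

lemma pos_succ: "a < r \<Longrightarrow> (pos a + k) mod m = pos (sh r a)"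
proof -
  assume a: "a < r"
  show ?thesis
  proof (cases "Suc a = r")
    case True
    have "a * k + k = m" using True m_eq by (simp add: True[symmetric])
    then have "(pos a + k) mod m = (t0 + m) mod m" unfolding pos_def
      by (simp add: mod_add_left_eq add.assoc)
    also have "\<dots> = pos 0" unfolding pos_def by simp
    finally show ?thesis using True a by (simp add: sh_def)
  next
    case False
    have "(pos a + k) mod m = (t0 + Suc a * k) mod m" unfolding pos_def
      by (simp add: mod_add_left_eq mod_add_right_eq algebra_simps)
    then show ?thesis using False a by (simp add: sh_def pos_def)
  qed
qed

definition cedge where
  "cedge j x y \<longleftrightarrow> (\<exists>i<m. c!i = (j,x) \<and> c!((i+1) mod m) = ((j+1) mod k, y))"

definition Be :: "real \<Rightarrow> nat \<Rightarrow> real mat" where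
  "Be \<epsilon> j = mat (n j) (n ((j+1) mod k))
     (\<lambda>(x,y). if cedge j x y then sgn (A j $$ (x,y)) else \<epsilon> * sgn (A j $$ (x,y)))"

definition PP where "PP \<epsilon> l = foldl (\<lambda>P j. P * Be \<epsilon> j) (1\<^sub>m (n 0)) [0..<l]"

lemma PP_0: "PP \<epsilon> 0 = 1\<^sub>m (n 0)" by (simp add: PP_def)

lemma PP_Suc: "PP \<epsilon> (Suc l) = PP \<epsilon> l * Be \<epsilon> l" by (simp add: PP_def)

lemma Be_carrier: "Be \<epsilon> j \<in> carrier_mat (n j) (n ((j+1) mod k))"
  unfolding Be_def by simp

lemma PP_carrier: "l \<le> k \<Longrightarrow> PP \<epsilon> l \<in> carrier_mat (n 0) (n (l mod k))"
proof (induction l)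
  case 0
  then show ?case by (simp add: PP_0)
next
  case (Suc l)
  then have "PP \<epsilon> l \<in> carrier_mat (n 0) (n l)" by simp
  moreover have "Be \<epsilon> l \<in> carrier_mat (n l) (n (Suc l mod k))" using Be_carrier by simp
  ultimately show ?case unfolding PP_Suc by (rule mult_carrier_mat)
qed

definition e where "e i = sgn (A (fst (c!i)) $$ (snd (c!i), snd (c!((i+1) mod m))))"

lemma PP_row:
  assumes "l \<le> k" "y < n (l mod k)"
  shows "PP 0 l $$ (u a, y) = (if y = snd (c!((pos a + l) mod m)) then (\<Prod>d<l. e ((pos a + d) mod m)) else 0)"
  using assms
proof (induction l arbitrary: y)
  case 0
  have "snd (c!((pos a + 0) mod m)) = u a" using c_pos pos_lt by simp
  then show ?case using 0 u_lt by (simp add: PP_0)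
next
  case (Suc l)
  define i0 where "i0 = (pos a + l) mod m"
  define v where "v = snd (c!i0)"
  define W where "W = (\<Prod>d<l. e ((pos a + d) mod m))"
  have i0m: "i0 < m" unfolding i0_def using m_pos by simp
  have lk: "l < k" using Suc by simp
  have ci0: "c!i0 = (l, v)" using fst_pos_shift[of a l] lk unfolding i0_def v_def
    by (metis mod_less prod.collapse)
  have vlt: "v < n l" using snd_lt[OF i0m] ci0 by simp
  have yl: "y < n ((l+1) mod k)" using Suc by simp
  have IH: "\<And>t. t < n l \<Longrightarrow> PP 0 l $$ (u a, t) = (if t = v then W else 0)"
    using Suc.IH[of _] lk unfolding i0_def v_def W_def by simp
  have car: "PP 0 l \<in> carrier_mat (n 0) (n l)" using PP_carrier[of l 0] lk by simp
  have "PP 0 (Suc l) $$ (u a, y) = (\<Sum>t\<in>{0..<n l}. PP 0 l $$ (u a, t) * Be 0 l $$ (t, y))"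
    unfolding PP_Suc using car Be_carrier[of 0 l] u_lt yl
    by (simp add: index_mult_mat scalar_prod_def)
  also have "\<dots> = (\<Sum>t\<in>{0..<n l}. if t = v then W * Be 0 l $$ (v, y) else 0)"
    by (rule sum.cong) (auto simp: IH)
  also have "\<dots> = W * Be 0 l $$ (v, y)" using vlt by simp
  finally have eq: "PP 0 (Suc l) $$ (u a, y) = W * Be 0 l $$ (v, y)" .
  have nx: "(i0 + 1) mod m = (pos a + Suc l) mod m" unfolding i0_def by (simp add: mod_Suc_eq)
  have fnx: "fst (c!((i0+1) mod m)) = (l + 1) mod k" using fst_step[OF i0m] ci0 by simp
  have ced: "cedge l v y \<longleftrightarrow> y = snd (c!((pos a + Suc l) mod m))"
  proof
    assume "cedge l v y"
    then obtain i where i: "i < m" "c!i = (l, v)" "c!((i+1) mod m) = ((l+1) mod k, y)"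
      unfolding cedge_def by blast
    have "i = i0" using i(1,2) ci0 i0m dist nth_eq_iff_index_eq by metis
    then show "y = snd (c!((pos a + Suc l) mod m))" using i(3) nx by simp
  next
    assume "y = snd (c!((pos a + Suc l) mod m))"
    then have "c!((i0+1) mod m) = ((l+1) mod k, y)" using fnx nx by (metis prod.collapse)
    then show "cedge l v y" unfolding cedge_def using i0m ci0 by blast
  qed
  have Bv: "Be 0 l $$ (v, y) = (if cedge l v y then sgn (A l $$ (v,y)) else 0)"
    unfolding Be_def using vlt yl by simp
  have ei0: "y = snd (c!((pos a + Suc l) mod m)) \<Longrightarrow> sgn (A l $$ (v,y)) = e i0"
    unfolding e_def using ci0 nx by simp
  show ?case using eq Bv ced ei0 unfolding W_def i0_def by (auto simp: mult.commute)
qed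

definition W where "W a = (\<Prod>d<k. e ((pos a + d) mod m))"

lemma PP_k_row:
  assumes "a < r" "y < n 0"
  shows "PP 0 k $$ (u a, y) = (if y = u (sh r a) then W a else 0)"
proof -
  have "snd (c!((pos a + k) mod m)) = u (sh r a)" using pos_succ[OF assms(1)] c_pos by simp
  then show ?thesis using PP_row[of k y a] assms unfolding W_def by simp
qed

lemma prod_blocks:
  fixes f :: "nat \<Rightarrow> real"
  shows "(\<Prod>a<R. \<Prod>d<K. f (a*K + d)) = (\<Prod>q<R*K. f q)"
proof (induction R)
  case 0
  then show ?case by simp
next
  case (Suc R)
  have "(\<Prod>q<Suc R*K. f q) = prod f {0..<R*K} * prod f {R*K..<R*K+K}"
    by (simp add: prod.atLeastLessThan_concat atLeast0LessThan[symmetric] add.commute)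
  also have "prod f {R*K..<R*K+K} = (\<Prod>d<K. f (R*K + d))"
  proof -
    have "prod f {0+R*K..<K+R*K} = prod (\<lambda>i. f (i + R*K)) {0..<K}"
      by (rule prod.shift_bounds_nat_ivl)
    then show ?thesis by (simp add: atLeast0LessThan add.commute)
  qed
  finally show ?case using Suc by (simp add: atLeast0LessThan)
qed

lemma W_alt: "W a = (\<Prod>d<k. e ((t0 + (a*k + d)) mod m))"
  unfolding W_def pos_add ..

lemma prod_W1: "(\<Prod>a<r. W a) = (\<Prod>a<r. \<Prod>d<k. e ((t0 + (a*k + d)) mod m))"
    unfolding W_alt ..
lemma prod_W2: "(\<Prod>a<r. \<Prod>d<k. e ((t0 + (a*k + d)) mod m)) = (\<Prod>q<r*k. e ((t0 + q) mod m))" 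
    by (rule prod_blocks[where f="\<lambda>q. e ((t0 + q) mod m)" and R=r and K=k])
lemma prod_W3: "(\<Prod>q<m. e ((t0 + q) mod m)) = (\<Prod>i<m. e i)"
  proof -
    let ?g = "\<lambda>q. (t0 + q) mod m"
    have inj: "inj_on ?g {..<m}"
    proof (rule inj_onI)
      fix x y assume "x \<in> {..<m}" "y \<in> {..<m}" "?g x = ?g y"
      then show "x = y" using mod_inj_add[where t=t0 and x=x and y=y and m=m] by simp
    qed
    have "?g ` {..<m} \<subseteq> {..<m}" using m_pos by auto
    then have img: "?g ` {..<m} = {..<m}" using endo_inj_surj inj by blast
    have "(\<Prod>i<m. e i) = prod e (?g ` {..<m})" unfolding img ..
    also have "\<dots> = (\<Prod>q<m. e (?g q))" by (rule prod.reindex[OF inj, unfolded o_def])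
    finally show ?thesis by (rule sym)
  qed
lemma prod_W: "(\<Prod>a<r. W a) = (\<Prod>i<m. e i)"
  unfolding prod_W1 prod_W2 m_eq[symmetric] prod_W3 ..

lemma prod_e: "(\<Prod>i<m. e i) = (-1) ^ neg_edges A c"
proof -
  define P where "P i \<longleftrightarrow> A (fst (c!i)) $$ (snd (c!i), snd (c!((i+1) mod m))) < 0" for i
  have ev: "e i = (if P i then -1 else 1)" if im: "i < m" for i
  proof -
    have "A (fst (c!i)) $$ (snd (c!i), snd (c!((i+1) mod m))) \<noteq> 0"
      using edge_c[OF im] unfolding edge_def by blast
    then show ?thesis unfolding e_def P_def by (simp add: sgn_real_def)
  qed
  have "(\<Prod>i<m. e i) = (\<Prod>i<m. if P i then -1 else 1)"
    by (rule prod.cong) (simp_all add: ev)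
  also have "\<dots> = (\<Prod>i\<in>{..<m} \<inter> {i. P i}. -1) * (\<Prod>i\<in>{..<m} \<inter> - {i. P i}. 1)"
    by (rule prod.If_cases) (rule finite_lessThan)
  also have "\<dots> = (-1) ^ card ({..<m} \<inter> {i. P i})" by simp
  also have "{..<m} \<inter> {i. P i} = {i. i < m \<and> P i}" by blast
  finally have "(\<Prod>i<m. e i) = (-1) ^ card {i. i < m \<and> P i}" .
  then show ?thesis unfolding neg_edges_def P_def by simp
qed

definition S where "S = u ` {..<r}"

lemma S_card: "card S = r" unfolding S_def using u_inj by (simp add: card_image)

lemma S_sub: "S \<subseteq> {..<n 0}" unfolding S_def using u_lt by auto

lemma S_set: "{i. i < n 0 \<and> i \<in> S} = S" using S_sub by auto

definition g where "g = pick S"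

lemma g_in: "i < r \<Longrightarrow> g i \<in> S" unfolding g_def using pick_in_set S_card by simp

lemma g_inj: "inj_on g {..<r}"
proof (rule inj_onI)
  fix x y assume "x \<in> {..<r}" "y \<in> {..<r}" "g x = g y"
  then show "x = y" unfolding g_def using pick_mono[of _ S] S_card
    by (metis lessThan_iff nat_neq_iff order.strict_iff_not)
qed

lemma g_img: "g ` {..<r} = S"
proof -
  have "g ` {..<r} \<subseteq> S" using g_in by auto
  moreover have "card (g ` {..<r}) = card S" using g_inj S_card by (simp add: card_image)
  moreover have "finite S" unfolding S_def by simp
  ultimately show ?thesis by (simp add: card_subset_eq)
qed

lemma g_lt: "i < r \<Longrightarrow> g i < n 0" using g_in S_sub by auto

definition h where "h a = inv_into {..<r} g (u a)"

lemma u_in_img: "a < r \<Longrightarrow> u a \<in> g ` {..<r}" using g_img unfolding S_def by auto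

lemma gh: "a < r \<Longrightarrow> g (h a) = u a" unfolding h_def using u_in_img by (simp add: f_inv_into_f)

lemma h_lt: "a < r \<Longrightarrow> h a < r" unfolding h_def using u_in_img
  by (metis inv_into_into lessThan_iff)

lemma h_inj: "inj_on h {..<r}"
proof (rule inj_onI)
  fix x y assume "x \<in> {..<r}" "y \<in> {..<r}" "h x = h y"
  then have "u x = u y" using gh by (metis lessThan_iff)
  then show "x = y" using u_inj \<open>x \<in> {..<r}\<close> \<open>y \<in> {..<r}\<close> by (meson inj_onD)
qed

lemma h_bij: "bij_betw h {..<r} {..<r}"
proof -
  have "h ` {..<r} \<subseteq> {..<r}" using h_lt by auto
  then have "h ` {..<r} = {..<r}" using h_inj by (simp add: endo_inj_surj)
  then show ?thesis using h_inj unfolding bij_betw_def by simp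
qed

lemma h_from_g: "a < r \<Longrightarrow> j < r \<Longrightarrow> g j = u a \<longleftrightarrow> j = h a"
proof
  assume "a < r" "j < r" "g j = u a"
  then show "j = h a" unfolding h_def using g_inj by (metis inv_into_f_f lessThan_iff)
next
  assume "a < r" "j = h a"
  then show "g j = u a" using gh by simp
qed

definition psi where "psi = map_permutation {..<r} h (sh r)"

lemma psi_perm: "psi permutes {..<r}"
  unfolding psi_def by (rule map_permutation_permutes[OF h_bij sh_permutes])

lemma psi_h: "a < r \<Longrightarrow> psi (h a) = h (sh r a)"
  unfolding psi_def using h_inj by (simp add: map_permutation_apply)

lemma psi_h_lt: "a < r \<Longrightarrow> psi (h a) < r"
  using psi_h h_lt sh_lt r_pos by simp

lemma sign_psi: "sign psi = (-1::int) ^ (r - 1)"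
proof -
  have "sign psi = sign (sh r)" unfolding psi_def
    using sign_map_permutation[OF h_inj sh_permutes] by simp
  also have "\<dots> = (-1) ^ (r - 1)" using sign_sh[of "r - 1"] r_pos by simp
  finally show ?thesis .
qed

definition M where "M = submatrix (PP 0 k) S S"

lemma PP_k_carrier: "PP \<epsilon> k \<in> carrier_mat (n 0) (n 0)" using PP_carrier[of k \<epsilon>] by simp

lemma subm_carrier: "submatrix (PP \<epsilon> k) S S \<in> carrier_mat r r"
  using PP_k_carrier[of \<epsilon>] S_set S_card unfolding carrier_mat_def by (simp add: dim_submatrix)

lemma subm_index: "i < r \<Longrightarrow> j < r \<Longrightarrow> submatrix (PP \<epsilon> k) S S $$ (i,j) = PP \<epsilon> k $$ (g i, g j)"
  unfolding g_def using PP_k_carrier[of \<epsilon>] S_set S_card by (simp add: submatrix_index)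

lemma M_h: "a < r \<Longrightarrow> j < r \<Longrightarrow> M $$ (h a, j) = (if j = psi (h a) then W a else 0)"
proof -
  assume a: "a < r" and j: "j < r"
  have "M $$ (h a, j) = PP 0 k $$ (u a, g j)" unfolding M_def using subm_index h_lt gh a j by simp
  also have "\<dots> = (if g j = u (sh r a) then W a else 0)" using PP_k_row a g_lt j by simp
  also have "g j = u (sh r a) \<longleftrightarrow> j = h (sh r a)"
    using h_from_g[of "sh r a" j] j a sh_permutes by (simp add: sh_lt)
  finally show ?thesis using psi_h a by simp
qed

lemma det_M: "det M = -1"
proof -
  have Mc: "M \<in> carrier_mat r r" unfolding M_def by (rule subm_carrier)
  have hb: "bij_betw h {..<r} {0..<r}" using h_bij by (simp add: atLeast0LessThan)
  have tm: "(\<Prod>i = 0..<r. M $$ (i, p i)) = (if p = psi then (\<Prod>a<r. W a) else 0)"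
    if p: "p permutes {0..<r}" for p
  proof -
    have re: "(\<Prod>i = 0..<r. M $$ (i, p i)) = (\<Prod>a<r. M $$ (h a, p (h a)))"
      using prod.reindex_bij_betw[OF hb, of "\<lambda>i. M $$ (i, p i)"] by simp
    show ?thesis
    proof (cases "p = psi")
      case True
      then have "(\<Prod>a<r. M $$ (h a, p (h a))) = (\<Prod>a<r. W a)"
        using M_h psi_h_lt by (intro prod.cong refl) simp
      then show ?thesis using True re by simp
    next
      case False
      then obtain x where x: "p x \<noteq> psi x" by auto
      have xr: "x < r"
      proof (rule ccontr)
        assume "\<not> x < r"
        then have "p x = x" "psi x = x" using p psi_perm permutes_not_in by (fastforce simp: atLeast0LessThan)+
        then show False using x by simp
      qed
      then obtain a where a: "a < r" "x = h a" using h_bij by (metis bij_betw_imp_surj_on imageE lessThan_iff)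
      have "p (h a) < r" using p a xr by (simp add: permutes_in_image atLeast0LessThan)
      then have "M $$ (h a, p (h a)) = 0" using M_h[OF a(1)] x a by simp
      then have "(\<Prod>a<r. M $$ (h a, p (h a))) = 0" using a by (intro prod_zero) auto
      then show ?thesis using False re by simp
    qed
  qed
  have psi_p: "psi permutes {0..<r}" using psi_perm by (simp add: atLeast0LessThan)
  have "det M = (\<Sum>p \<in> {p. p permutes {0..<r}}. signof p * (\<Prod>i = 0..<r. M $$ (i, p i)))"
    by (rule det_def'[OF Mc])
  also have "\<dots> = (\<Sum>p \<in> {p. p permutes {0..<r}}. if p = psi then signof psi * (\<Prod>a<r. W a) else 0)"
    by (rule sum.cong) (auto simp: tm)
  also have "\<dots> = signof psi * (\<Prod>a<r. W a)"
    using psi_p by (simp add: finite_permutations)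
  also have "\<dots> = of_int ((-1) ^ (r - 1)) * (-1) ^ neg_edges A c"
    using sign_psi prod_W prod_e by simp
  also have "\<dots> = - 1"
  proof -
    have "(-1::int) ^ (r - 1 + neg_edges A c) = - 1"
      using par r_pos unfolding r_def[symmetric]
      by (metis (no_types, lifting) Suc_diff_1 add_Suc minus_one_mult_self power_Suc
          mult_minus1 verit_minus_simplify(4))
    then have "(-1::real) ^ (r - 1 + neg_edges A c) = - 1"
      by (metis of_int_1 of_int_minus of_int_power)
    then show ?thesis by (simp add: power_add)
  qed
  finally show ?thesis .
qed

lemma Be_entry_cont:
  assumes "t < n j" "y < n ((j+1) mod k)"
  shows "continuous_on UNIV (\<lambda>\<epsilon>. Be \<epsilon> j $$ (t,y))"
proof (cases "cedge j t y")
  case True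
  then show ?thesis unfolding Be_def using assms by (simp add: continuous_on_const)
next
  case False
  then show ?thesis unfolding Be_def using assms
    by (simp add: continuous_on_mult continuous_on_const continuous_on_id)
qed

lemma PP_cont: "l \<le> k \<Longrightarrow> i < n 0 \<Longrightarrow> j < n (l mod k) \<Longrightarrow> continuous_on UNIV (\<lambda>\<epsilon>. PP \<epsilon> l $$ (i,j))"
proof (induction l arbitrary: j)
  case 0
  then show ?case by (simp add: PP_0 continuous_on_const)
next
  case (Suc l)
  have lk: "l < k" using Suc by simp
  have jl: "j < n ((l+1) mod k)" using Suc by simp
  have eq: "(\<lambda>\<epsilon>. PP \<epsilon> (Suc l) $$ (i,j)) = (\<lambda>\<epsilon>. \<Sum>t\<in>{0..<n l}. PP \<epsilon> l $$ (i,t) * Be \<epsilon> l $$ (t,j))"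
  proof (rule ext)
    fix \<epsilon>
    have car: "PP \<epsilon> l \<in> carrier_mat (n 0) (n l)" using PP_carrier[of l \<epsilon>] lk by simp
    show "PP \<epsilon> (Suc l) $$ (i,j) = (\<Sum>t\<in>{0..<n l}. PP \<epsilon> l $$ (i,t) * Be \<epsilon> l $$ (t,j))"
      unfolding PP_Suc using car Be_carrier[of \<epsilon> l] Suc.prems jl
      by (simp add: index_mult_mat scalar_prod_def)
  qed
  have IH: "t < n l \<Longrightarrow> continuous_on UNIV (\<lambda>\<epsilon>. PP \<epsilon> l $$ (i,t))" for t
    using Suc.IH[of t] Suc.prems lk by simp
  show ?case unfolding eq
    by (intro continuous_on_sum continuous_on_mult IH Be_entry_cont) (use jl in auto)
qed

lemma det_cont: "continuous_on UNIV (\<lambda>\<epsilon>. det (submatrix (PP \<epsilon> k) S S))"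
proof -
  have eq: "(\<lambda>\<epsilon>. det (submatrix (PP \<epsilon> k) S S)) =
    (\<lambda>\<epsilon>. \<Sum>p\<in>{p. p permutes {0..<r}}. signof p * (\<Prod>i=0..<r. PP \<epsilon> k $$ (g i, g (p i))))"
  proof (rule ext)
    fix \<epsilon>
    show "det (submatrix (PP \<epsilon> k) S S) =
      (\<Sum>p\<in>{p. p permutes {0..<r}}. signof p * (\<Prod>i=0..<r. PP \<epsilon> k $$ (g i, g (p i))))"
      unfolding det_def'[OF subm_carrier]
    proof (rule sum.cong[OF refl])
      fix p assume "p \<in> {p. p permutes {0..<r}}"
      then have pr: "i < r \<Longrightarrow> p i < r" for i by (simp add: permutes_in_image)
      show "signof p * (\<Prod>i=0..<r. submatrix (PP \<epsilon> k) S S $$ (i, p i)) =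
            signof p * (\<Prod>i=0..<r. PP \<epsilon> k $$ (g i, g (p i)))"
        by (intro arg_cong[where f="\<lambda>x. signof p * x"] prod.cong refl) (simp add: subm_index pr)
    qed
  qed
  have pr: "p permutes {0..<r} \<Longrightarrow> i < r \<Longrightarrow> p i < r" for p i by (simp add: permutes_in_image)
  show ?thesis unfolding eq
    by (intro continuous_on_sum continuous_on_mult continuous_on_const continuous_on_prod PP_cont)
       (auto simp: g_lt pr)
qed

lemma exists_eps: "\<exists>\<epsilon>>0. det (submatrix (PP \<epsilon> k) S S) < 0"
proof -
  let ?f = "\<lambda>\<epsilon>. det (submatrix (PP \<epsilon> k) S S)"
  have "isCont ?f 0" using det_cont continuous_on_eq_continuous_at[OF open_UNIV] by blast
  then have lim: "(?f \<longlongrightarrow> ?f 0) (at 0)" by (rule isContD)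
  have "?f 0 = -1" using det_M unfolding M_def by simp
  then have "eventually (\<lambda>x. ?f x < 0) (at 0)" using order_tendstoD(2)[OF lim] by simp
  then obtain d :: real where d: "d > 0" "\<And>x. x \<noteq> 0 \<Longrightarrow> dist x 0 < d \<Longrightarrow> ?f x < 0"
    unfolding eventually_at by blast
  have "?f (d/2) < 0" using d by simp
  then show ?thesis using d(1) by (intro exI[of _ "d/2"]) simp
qed

end

theorem corollary6:
  fixes k :: nat and n :: "nat \<Rightarrow> nat" and A :: "nat \<Rightarrow> real mat"
  assumes "k \<ge> 1"
    and "\<forall>j < k. n j \<ge> 1"
    and "\<forall>j < k. A j \<in> carrier_mat (n j) (n ((j + 1) mod k))"
    and "\<exists>c. is_e_cycle k n A c"
  shows "\<exists>B. (\<forall>j < k. B j \<in> qual_class (A j)) \<and> \<not> P0_matrix (cyc_prod (n 0) k B)"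
proof -
  obtain c where ce: "is_e_cycle k n A c" using assms(4) by blast
  interpret E: ecyc k n A c
    using assms(1,3) ce unfolding is_e_cycle_def by unfold_locales auto
  obtain \<epsilon> where eps: "\<epsilon> > 0" "det (submatrix (E.PP \<epsilon> k) E.S E.S) < 0"
    using E.exists_eps by blast
  show ?thesis
  proof (intro exI conjI allI impI)
    fix j assume j: "j < k"
    have Aj: "A j \<in> carrier_mat (n j) (n ((j + 1) mod k))" using assms(3) j by blast
    show "E.Be \<epsilon> j \<in> qual_class (A j)"
      unfolding qual_class_def E.Be_def using Aj eps(1) by (auto simp: sgn_mult)
  next
    show "\<not> P0_matrix (cyc_prod (n 0) k (E.Be \<epsilon>))"
    proof
      assume P: "P0_matrix (cyc_prod (n 0) k (E.Be \<epsilon>))"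
      have eqc: "cyc_prod (n 0) k (E.Be \<epsilon>) = E.PP \<epsilon> k" unfolding cyc_prod_def E.PP_def ..
      have "dim_row (E.PP \<epsilon> k) = n 0" using E.PP_k_carrier by blast
      then have "E.S \<subseteq> {0..<dim_row (E.PP \<epsilon> k)}" using E.S_sub by auto
      then have "det (submatrix (E.PP \<epsilon> k) E.S E.S) \<ge> 0" using P unfolding eqc P0_matrix_def by blast
      then show False using eps(2) by simp
    qed
  qed
qed

end
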